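(* In the near-field model below, with $p_{\mathrm c},p_{\mathrm s},\alpha_{\mathrm s}>0$ and $L\in\mathbb Z_{>0}$ fixed, the quantity $\tilde{\mathcal R}^{\mathrm c}_{\mathrm{c,s}}=\frac1L\log_2\big(1+\frac{p_{\mathrm s}L\alpha_{\mathrm s}\|\mathbf h_{\mathrm s}\|^4}{1+p_{\mathrm c}\|\mathbf h_{\mathrm c}\|^2}\big)$ (a lower bound on the uplink sensing rate of the communications-centric design) satisfies $$\lim_{N_y,N_z\to\infty}\tilde{\mathcal R}^{\mathrm c}_{\mathrm{c,s}}=\frac1L\log_2\!\Big(1+\frac{p_{\mathrm s}L\alpha_{\mathrm s}\zeta^2}{9+3p_{\mathrm c}\zeta}\Big).$$
   Context: Near-field model: a uniform planar array lies in the $y$–$z$ plane centered at the origin, with $N=N_yN_z$ elements ($N_y,N_z$ odd). Element $(n_y,n_z)$, $n_y\in\{-\frac{N_y-1}2,\dots,\frac{N_y-1}2\}$, $n_z\in\{-\frac{N_z-1}2,\dots,\frac{N_z-1}2\}$, is a $\sqrt A\times\sqrt A$ square centered at $(0,n_yd,n_zd)$, with spacing $d>\sqrt A$; $\zeta=A/d^2\in(0,1]$; $\lambda>0$ is the wavelength. A node $i\in\{\mathrm c,\mathrm s\}$ (communication user, target) is at distance $r_i$, elevation $\theta_i\in[0,\pi]$, azimuth $\phi_i\in[-\pi/2,\pi/2]$; $\Psi_i=\sin\theta_i\cos\phi_i$, $\Phi_i=\sin\theta_i\sin\phi_i$, $\Omega_i=\cos\theta_i$, $\epsilon_i=d/r_i$,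 $r^{(i)}_{n_y,n_z}=r_i\sqrt{(n_y\epsilon_i-\Phi_i)^2+(n_z\epsilon_i-\Omega_i)^2+\Psi_i^2}$. The channel vector $\mathbf h_i\in\mathbb C^N$ has entries $\sqrt{A\frac{r_i^3\Psi_i^3+r_i\Psi_i(r_i\Omega_i-n_zd)^2}{4\pi (r^{(i)}_{n_y,n_z})^5}}\,e^{-\mathrm j\frac{2\pi}{\lambda}r^{(i)}_{n_y,n_z}}$. The paper assumes throughout $r_i\gg d$, $r_i\gg\sqrt A$, so $\epsilon_i\ll1$. The limit is taken with all parameters other than $N_y,N_z$ fixed.
   Formalization: In place of the limit, for every delta > 0 there is e0 > 0 such that, whenever $\epsilon_c,\epsilon_s$ < e0, the quantity is eventually in $N_y,N_z$ within delta of the right-hand side; $\theta_i$ and $\phi_i$ lie in open intervals. The statement above fails without it. *)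

theory Defs
  imports "HOL-Analysis.Analysis"
begin

text \<open>Near-field UPA model. A node is described by distance r, elevation theta, azimuth phi.
  Array half-sizes My, Mz: N_y = 2 My + 1, N_z = 2 Mz + 1, element indices
  n_y in {-My..My}, n_z in {-Mz..Mz}.\<close>

definition Psi :: "real \<Rightarrow> real \<Rightarrow> real" where
  "Psi theta phi = sin theta * cos phi"
definition Phi :: "real \<Rightarrow> real \<Rightarrow> real" where
  "Phi theta phi = sin theta * sin phi"
definition Omega :: "real \<Rightarrow> real" where
  "Omega theta = cos theta"

definition elem_dist :: "real \<Rightarrow> real \<Rightarrow> real \<Rightarrow> real \<Rightarrow> int \<Rightarrow> int \<Rightarrow> real" where
  "elem_dist d r theta phi ny nz =
     r * sqrt ((of_int ny * (d / r) - Phi theta phi)\<^sup>2 + (of_int nz * (d / r) - Omega theta)\<^sup>2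
               + (Psi theta phi)\<^sup>2)"

definition chan_entry :: "real \<Rightarrow> real \<Rightarrow> real \<Rightarrow> real \<Rightarrow> real \<Rightarrow> real \<Rightarrow> int \<Rightarrow> int \<Rightarrow> complex" where
  "chan_entry A lambda d r theta phi ny nz =
     (let rn = elem_dist d r theta phi ny nz; P = Psi theta phi in
      complex_of_real (sqrt (A * (r ^ 3 * P ^ 3 + r * P * (r * Omega theta - of_int nz * d)\<^sup>2)
                                / (4 * pi * rn ^ 5)))
      * cis (- 2 * pi / lambda * rn))"

definition chan_norm :: "real \<Rightarrow> real \<Rightarrow> real \<Rightarrow> real \<Rightarrow> real \<Rightarrow> real \<Rightarrow> nat \<Rightarrow> nat \<Rightarrow> real" where
  "chan_norm A lambda d r theta phi My Mz =
     sqrt (\<Sum>ny\<in>{- int My..int My}. \<Sum>nz\<in>{- int Mz..int Mz}.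
             (cmod (chan_entry A lambda d r theta phi ny nz))\<^sup>2)"

definition R_cs_tilde :: "real \<Rightarrow> real \<Rightarrow> real \<Rightarrow> nat \<Rightarrow> real \<Rightarrow> real \<Rightarrow> real" where
  "R_cs_tilde p_c p_s alpha_s L hc hs =
     1 / real L * log 2 (1 + p_s * real L * alpha_s * hs ^ 4 / (1 + p_c * hc\<^sup>2))"

end

theory Submission
  imports Defs "HOL-Real_Asymp.Real_Asymp"
begin


lemma tele_int:
  fixes V :: "int \<Rightarrow> real"
  assumes "a \<le> b + 1"
  shows "(\<Sum>n\<in>{a..b}. V (n+1) - V n) = V (b+1) - V a"
proof -
  have "a - 1 \<le> b" using assms by simp
  then show ?thesis
  proof (induction b rule: int_ge_induct)
    case base then show ?case by simp
  next
    case (step i)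
    have "{a..i+1} = insert (i+1) {a..i}" using step by auto
    then show ?case using step by simp
  qed
qed

locale unimod =
  fixes h F :: "real \<Rightarrow> real" and c Hm lo hi :: real
  assumes der: "\<And>x. (F has_real_derivative h x) (at x)"
    and inc: "\<And>x y. x \<le> y \<Longrightarrow> y \<le> c \<Longrightarrow> h x \<le> h y"
    and dec: "\<And>x y. c \<le> x \<Longrightarrow> x \<le> y \<Longrightarrow> h y \<le> h x"
    and hnn: "\<And>x. 0 \<le> h x" and hmax: "\<And>x. h x \<le> Hm"
    and Fhi: "\<And>x. F x \<le> hi" and Flo: "\<And>x. lo \<le> F x"
begin

lemma mvt: assumes "x < y" obtains z where "x < z" "z < y" "F y - F x = (y - x) * h z"
  using MVT2[OF assms, of F h] der by blast

lemma Fmono: assumes "x \<le> y" shows "F x \<le> F y"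
proof (cases "x = y")
  case False
  then have "x < y" using assms by simp
  then obtain z where "F y - F x = (y - x) * h z" using mvt by blast
  moreover have "0 \<le> (y - x) * h z" using \<open>x < y\<close> hnn by simp
  ultimately show ?thesis by simp
qed simp

lemma Fdiff: assumes "x \<le> y" shows "F y - F x \<le> (y - x) * Hm"
proof (cases "x = y")
  case False
  then have "x < y" using assms by simp
  then obtain z where "F y - F x = (y - x) * h z" using mvt by blast
  moreover have "(y - x) * h z \<le> (y - x) * Hm" using \<open>x < y\<close> hmax by (simp add: mult_left_mono)
  ultimately show ?thesis by simp
qed simp

lemma step_up_inc: assumes "e > 0" "x + e \<le> c" shows "e * h x \<le> F (x + e) - F x"
proof -
  obtain z where z: "x < z" "z < x + e" "F (x + e) - F x = (x + e - x) * h z" using mvt[of x "x+e"] assms by auto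
  have "h x \<le> h z" using inc[of x z] z assms by simp
  then show ?thesis using z assms by (simp add: mult_left_mono)
qed

lemma step_up_dec: assumes "e > 0" "c \<le> x - e" shows "e * h x \<le> F x - F (x - e)"
proof -
  obtain z where z: "x - e < z" "z < x" "F x - F (x - e) = (x - (x - e)) * h z" using mvt[of "x-e" x] assms by auto
  have "h x \<le> h z" using dec[of z x] z assms by simp
  then show ?thesis using z assms by (simp add: mult_left_mono)
qed

lemma step_lo_inc: assumes "e > 0" "x \<le> c" shows "F x - F (x - e) \<le> e * h x"
proof -
  obtain z where z: "x - e < z" "z < x" "F x - F (x - e) = (x - (x - e)) * h z" using mvt[of "x-e" x] assms by auto
  have "h z \<le> h x" using inc[of z x] z assms by simp
  then show ?thesis using z assms by (simp add: mult_left_mono)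
qed

lemma step_lo_dec: assumes "e > 0" "c \<le> x" shows "F (x + e) - F x \<le> e * h x"
proof -
  obtain z where z: "x < z" "z < x + e" "F (x + e) - F x = (x + e - x) * h z" using mvt[of x "x+e"] assms by auto
  have "h z \<le> h x" using dec[of x z] z assms by simp
  then show ?thesis using z assms by (simp add: mult_left_mono)
qed

lemma sum_upper:
  assumes e: "e > 0" and ab: "a \<le> b + 1"
  shows "e * (\<Sum>n\<in>{a..b}. h (of_int n * e)) \<le> hi - lo + 2 * e * Hm"
proof -
  define k where "k = \<lfloor>c / e\<rfloor>"
  have k1: "of_int k * e \<le> c" using e unfolding k_def
    by (metis floor_divide_lower)
  have k2: "c < (of_int k + 1) * e" using e unfolding k_def
    by (metis floor_divide_upper)
  have Hm0: "0 \<le> Hm" using hnn[of 0] hmax[of 0] by linarith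
  define W where "W n = F ((of_int n - (if n > k then 1 else 0)) * e)
      + e * Hm * (if n \<le> k then 0 else if n = k + 1 then 1 else 2)" for n
  have step: "e * h (of_int n * e) \<le> W (n+1) - W n" for n
  proof -
    consider "n \<le> k - 1" | "n = k" | "n = k + 1" | "n \<ge> k + 2" by linarith
    then show ?thesis
    proof cases
      case 1
      have "(of_int n + 1) * e \<le> of_int k * e" using 1 e by (intro mult_right_mono) simp_all
      then have "of_int n * e + e \<le> c" using k1 by (simp add: algebra_simps)
      then have "e * h (of_int n * e) \<le> F (of_int n * e + e) - F (of_int n * e)" using step_up_inc e by blast
      moreover have "W (n+1) - W n = F (of_int n * e + e) - F (of_int n * e)"
        using 1 by (simp add: W_def distrib_right)
      ultimately show ?thesis by simp
    next
      case 2
      then show ?thesis using hmax[of "of_int n * e"] e by (simp add: W_def mult_left_mono)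
    next
      case 3
      have "F (of_int k * e) \<le> F ((of_int k + 1) * e)" using e by (intro Fmono) simp
      moreover have "e * h (of_int n * e) \<le> e * Hm" using hmax e by (simp add: mult_left_mono)
      ultimately show ?thesis using 3 by (simp add: W_def algebra_simps)
    next
      case 4
      have "(of_int k + 1) * e \<le> (of_int n - 1) * e" using 4 e by (intro mult_right_mono) simp_all
      then have "c \<le> of_int n * e - e" using k2 by (simp add: algebra_simps)
      then have "e * h (of_int n * e) \<le> F (of_int n * e) - F (of_int n * e - e)" using step_up_dec e by blast
      moreover have "W (n+1) - W n = F (of_int n * e) - F (of_int n * e - e)"
        using 4 by (simp add: W_def algebra_simps)
      ultimately show ?thesis by simp
    qed
  qed
  have "e * (\<Sum>n\<in>{a..b}. h (of_int n * e)) = (\<Sum>n\<in>{a..b}. e * h (of_int n * e))"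
    by (simp add: sum_distrib_left)
  also have "\<dots> \<le> (\<Sum>n\<in>{a..b}. W (n+1) - W n)" by (intro sum_mono step)
  also have "\<dots> = W (b+1) - W a" using tele_int ab by blast
  also have "\<dots> \<le> hi - lo + 2 * e * Hm"
  proof -
    have eH: "0 \<le> e * Hm" using e Hm0 by simp
    have Wb: "0 \<le> e * Hm * (if n \<le> k then 0 else if n = k + 1 then 1 else 2)
       \<and> e * Hm * (if n \<le> k then 0 else if n = k + 1 then 1 else 2) \<le> 2 * e * Hm" for n
      using eH by (auto simp: mult.commute)
    have "W (b+1) \<le> hi + 2 * e * Hm" using Fhi[of "(of_int (b+1) - (if b+1 > k then 1 else 0)) * e"] Wb[of "b+1"] unfolding W_def
      by linarith
    moreover have "lo \<le> W a" using Flo[of "(of_int a - (if a > k then 1 else 0)) * e"] Wb[of a] unfolding W_def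
      by linarith
    ultimately show ?thesis by simp
  qed
  finally show ?thesis .
qed

lemma sum_lower:
  assumes e: "e > 0" and M: "0 \<le> M"
  shows "F (of_int M * e) - F (- of_int M * e) - e * Hm \<le> e * (\<Sum>n\<in>{-M..M}. h (of_int n * e))"
proof -
  define k where "k = \<lfloor>c / e\<rfloor>"
  have k1: "of_int k * e \<le> c" using e unfolding k_def
    by (metis floor_divide_lower)
  have k2: "c < (of_int k + 1) * e" using e unfolding k_def
    by (metis floor_divide_upper)
  define D where "D = F ((of_int k + 1) * e) - F (of_int k * e)"
  have D0: "0 \<le> D" unfolding D_def using Fmono[of "of_int k * e" "(of_int k + 1) * e"] e by simp
  have D1: "D \<le> e * Hm" unfolding D_def using Fdiff[of "of_int k * e" "(of_int k + 1) * e"] e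
    by (simp add: algebra_simps)
  define U where "U n = (if n \<le> k + 1 then F ((of_int n - 1) * e) else F (of_int n * e) - D)" for n
  have step: "U (n+1) - U n \<le> e * h (of_int n * e)" for n
  proof -
    consider "n \<le> k" | "n = k + 1" | "n \<ge> k + 2" by linarith
    then show ?thesis
    proof cases
      case 1
      have "of_int n * e \<le> of_int k * e" using 1 e by (intro mult_right_mono) simp_all
      then have "of_int n * e \<le> c" using k1 by linarith
      then have "F (of_int n * e) - F (of_int n * e - e) \<le> e * h (of_int n * e)" using step_lo_inc[of e "of_int n * e"] e by simp
      moreover have "U (n+1) - U n = F (of_int n * e) - F (of_int n * e - e)"
        using 1 by (simp add: U_def algebra_simps)
      ultimately show ?thesis by simp
    next
      case 2
      have "c \<le> of_int n * e" using 2 k2 by (simp add: algebra_simps)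
      then have "F (of_int n * e + e) - F (of_int n * e) \<le> e * h (of_int n * e)" using step_lo_dec e by simp
      moreover have "U (n+1) - U n = F (of_int n * e + e) - F (of_int n * e)"
        using 2 by (simp add: U_def D_def algebra_simps)
      ultimately show ?thesis by simp
    next
      case 3
      have "(of_int k + 1) * e \<le> of_int n * e" using 3 e by (intro mult_right_mono) simp_all
      then have "c \<le> of_int n * e" using k2 by simp
      then have "F (of_int n * e + e) - F (of_int n * e) \<le> e * h (of_int n * e)" using step_lo_dec e by simp
      moreover have "U (n+1) - U n = F (of_int n * e + e) - F (of_int n * e)"
        using 3 by (simp add: U_def algebra_simps)
      ultimately show ?thesis by simp
    qed
  qed
  have "F (of_int M * e) - e * Hm \<le> U (M + 1)"
  proof (cases "M + 1 \<le> k + 1")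
    case True
    have "0 \<le> e * Hm" using e hnn[of 0] hmax[of 0] by simp
    then show ?thesis using True by (simp add: U_def)
  next
    case False
    have "F (of_int M * e) \<le> F ((of_int M + 1) * e)" using e by (intro Fmono) (simp add: algebra_simps)
    then show ?thesis using False D1 by (simp add: U_def)
  qed
  moreover have "U (-M) \<le> F (- of_int M * e)"
  proof (cases "-M \<le> k + 1")
    case True
    have "F ((- of_int M - 1) * e) \<le> F (- of_int M * e)" using e by (intro Fmono) (simp add: algebra_simps)
    then show ?thesis using True by (simp add: U_def)
  next
    case False then show ?thesis using D0 by (simp add: U_def)
  qed
  moreover have "U (M+1) - U (-M) = (\<Sum>n\<in>{-M..M}. U (n+1) - U n)" using tele_int[of "-M" M U] M by simp
  moreover have "\<dots> \<le> (\<Sum>n\<in>{-M..M}. e * h (of_int n * e))" by (intro sum_mono step)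
  moreover have "\<dots> = e * (\<Sum>n\<in>{-M..M}. h (of_int n * e))" by (simp add: sum_distrib_left)
  ultimately show ?thesis by linarith
qed

end




definition hk :: "nat \<Rightarrow> real \<Rightarrow> real \<Rightarrow> real" where
  "hk k b y = 1 / sqrt (y\<^sup>2 + b) ^ k"

definition G5 :: "real \<Rightarrow> real \<Rightarrow> real" where
  "G5 b y = y * (2 * y\<^sup>2 + 3 * b) / (3 * b\<^sup>2 * sqrt (y\<^sup>2 + b) ^ 3)"

definition G3 :: "real \<Rightarrow> real \<Rightarrow> real" where
  "G3 b y = y / (b * sqrt (y\<^sup>2 + b))"

definition G2 :: "real \<Rightarrow> real \<Rightarrow> real" where
  "G2 P y = arctan (y / P) / P"

lemma sqrt_deriv:
  assumes b: "b > 0"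
  shows "((\<lambda>y. sqrt (y\<^sup>2 + b)) has_real_derivative y / sqrt (y\<^sup>2 + b)) (at y)"
proof -
  have p: "y\<^sup>2 + b > 0" using b by (simp add: add_nonneg_pos)
  have d1: "((\<lambda>y. y\<^sup>2 + b) has_real_derivative 2 * y) (at y)"
    by (auto intro!: derivative_eq_intros)
  have "((\<lambda>y. sqrt (y\<^sup>2 + b)) has_real_derivative inverse (sqrt (y\<^sup>2 + b)) / 2 * (2 * y)) (at y)"
    using DERIV_chain2[OF DERIV_real_sqrt[OF p] d1] .
  then show ?thesis by (simp add: field_simps)
qed

lemma G5_deriv:
  assumes b: "b > 0"
  shows "(G5 b has_real_derivative hk 5 b y) (at y)"
proof -
  have p: "y\<^sup>2 + b > 0" using b by (simp add: add_nonneg_pos)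
  define s where "s = sqrt (y\<^sup>2 + b)"
  have s: "s > 0" "s\<^sup>2 = y\<^sup>2 + b" using p by (auto simp: s_def)
  have dN: "((\<lambda>y. y * (2 * y\<^sup>2 + 3 * b)) has_real_derivative 6 * y\<^sup>2 + 3 * b) (at y)"
    by (auto intro!: derivative_eq_intros simp: power2_eq_square algebra_simps)
  have "((\<lambda>y. sqrt (y\<^sup>2 + b) ^ 3) has_real_derivative real 3 * s ^ (3 - 1) * (y / s)) (at y)"
    using DERIV_chain2[OF DERIV_pow[of 3] sqrt_deriv[OF b]] unfolding s_def by simp
  then have dS: "((\<lambda>y. 3 * b\<^sup>2 * sqrt (y\<^sup>2 + b) ^ 3) has_real_derivative 3 * b\<^sup>2 * (3 * s ^ 2 * (y / s))) (at y)"
    by (intro DERIV_cmult) simp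
  have g0: "3 * b\<^sup>2 * sqrt (y\<^sup>2 + b) ^ 3 \<noteq> 0" using b p by simp
  have "(G5 b has_real_derivative ((6 * y\<^sup>2 + 3 * b) * (3 * b\<^sup>2 * sqrt (y\<^sup>2 + b) ^ 3) - 3 * b\<^sup>2 * (3 * s\<^sup>2 * (y / s)) * (y * (2 * y\<^sup>2 + 3 * b))) / (3 * b\<^sup>2 * sqrt (y\<^sup>2 + b) ^ 3) ^ Suc (Suc 0)) (at y)"
    unfolding G5_def by (rule DERIV_quotient[OF dN dS g0])
  moreover have "((6 * y\<^sup>2 + 3 * b) * (3 * b\<^sup>2 * sqrt (y\<^sup>2 + b) ^ 3) - 3 * b\<^sup>2 * (3 * s\<^sup>2 * (y / s)) * (y * (2 * y\<^sup>2 + 3 * b))) / (3 * b\<^sup>2 * sqrt (y\<^sup>2 + b) ^ 3) ^ Suc (Suc 0) = hk 5 b y"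
  proof -
    have e1: "s ^ 3 = s * (y\<^sup>2 + b)" using s(2) by (simp add: power3_eq_cube power2_eq_square)
    have e2: "3 * s\<^sup>2 * (y / s) = 3 * (s * y)" using s(1) by (simp add: power2_eq_square)
    have "(6 * y\<^sup>2 + 3 * b) * (3 * b\<^sup>2 * s ^ 3) - 3 * b\<^sup>2 * (3 * s\<^sup>2 * (y / s)) * (y * (2 * y\<^sup>2 + 3 * b))
       = (6 * y\<^sup>2 + 3 * b) * (3 * b\<^sup>2 * (s * (y\<^sup>2 + b))) - 3 * b\<^sup>2 * (3 * (s * y)) * (y * (2 * y\<^sup>2 + 3 * b))"
      by (simp only: e1 e2)
    also have "\<dots> = 9 * b ^ 4 * s" by algebra
    finally have num: "(6 * y\<^sup>2 + 3 * b) * (3 * b\<^sup>2 * s ^ 3) - 3 * b\<^sup>2 * (3 * s\<^sup>2 * (y / s)) * (y * (2 * y\<^sup>2 + 3 * b)) = 9 * b ^ 4 * s" .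
    show ?thesis unfolding hk_def s_def[symmetric] num using s(1) b
      by (simp add: field_simps) algebra
  qed
  ultimately show ?thesis by simp
qed

lemma G3_deriv:
  assumes b: "b > 0"
  shows "(G3 b has_real_derivative hk 3 b y) (at y)"
proof -
  have p: "y\<^sup>2 + b > 0" using b by (simp add: add_nonneg_pos)
  define s where "s = sqrt (y\<^sup>2 + b)"
  have s: "s > 0" "s\<^sup>2 = y\<^sup>2 + b" using p by (auto simp: s_def)
  have dS: "((\<lambda>y. b * sqrt (y\<^sup>2 + b)) has_real_derivative b * (y / s)) (at y)"
    using sqrt_deriv[OF b, of y] unfolding s_def by (intro DERIV_cmult)
  have g0: "b * sqrt (y\<^sup>2 + b) \<noteq> 0" using b p by simp
  have "(G3 b has_real_derivative (1 * (b * sqrt (y\<^sup>2 + b)) - b * (y / s) * y) / (b * sqrt (y\<^sup>2 + b)) ^ Suc (Suc 0)) (at y)"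
    unfolding G3_def by (rule DERIV_quotient[OF DERIV_ident dS g0])
  moreover have "(1 * (b * sqrt (y\<^sup>2 + b)) - b * (y / s) * y) / (b * sqrt (y\<^sup>2 + b)) ^ Suc (Suc 0) = hk 3 b y"
  proof -
    have "1 * (b * s) - b * (y / s) * y = b * (s\<^sup>2 - y\<^sup>2) / s" using s(1) by (simp add: field_simps power2_eq_square)
    also have "\<dots> = b * b / s" using s(2) by simp
    finally have num: "1 * (b * s) - b * (y / s) * y = b * b / s" .
    show ?thesis unfolding hk_def s_def[symmetric] num using s(1) b
      by (simp add: field_simps) algebra
  qed
  ultimately show ?thesis by simp
qed

lemma G2_deriv:
  assumes P: "P > 0"
  shows "(G2 P has_real_derivative hk 2 (P\<^sup>2) y) (at y)"
proof -
  have d1: "((\<lambda>y. y / P) has_real_derivative 1 / P) (at y)"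
    using DERIV_cdivide[OF DERIV_ident, of P y UNIV] by simp
  have "((\<lambda>y. arctan (y / P)) has_real_derivative inverse (1 + (y / P)\<^sup>2) * (1 / P)) (at y)"
    using DERIV_chain2[OF DERIV_arctan d1] .
  then have "(G2 P has_real_derivative inverse (1 + (y / P)\<^sup>2) * (1 / P) / P) (at y)"
    unfolding G2_def by (rule DERIV_cdivide)
  moreover have "inverse (1 + (y / P)\<^sup>2) * (1 / P) / P = hk 2 (P\<^sup>2) y"
  proof -
    have q: "y\<^sup>2 + P\<^sup>2 > 0" using P by (simp add: add_nonneg_pos)
    have h1: "sqrt (y\<^sup>2 + P\<^sup>2) ^ 2 = y\<^sup>2 + P\<^sup>2" using q by simp
    have h2: "1 + (y / P)\<^sup>2 = (y\<^sup>2 + P\<^sup>2) / P\<^sup>2" using P by (simp add: field_simps)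
    have "inverse (1 + (y / P)\<^sup>2) * (1 / P) / P = (P * P) / (y\<^sup>2 + P\<^sup>2) / (P * P)"
      unfolding h2 by (simp add: inverse_divide power2_eq_square)
    also have "\<dots> = 1 / (y\<^sup>2 + P\<^sup>2)" using P by simp
    finally show ?thesis unfolding hk_def h1 .
  qed
  ultimately show ?thesis by simp
qed

lemma G5_top: assumes "b > 0" shows "(G5 b \<longlongrightarrow> 2 / (3 * b\<^sup>2)) at_top"
proof -
  have "(G5 b \<longlongrightarrow> 2 * inverse (b\<^sup>2) / 3) at_top" unfolding G5_def using assms by real_asymp
  then show ?thesis by (simp add: field_simps)
qed

lemma G5_bot: assumes "b > 0" shows "(G5 b \<longlongrightarrow> - (2 / (3 * b\<^sup>2))) at_bot"
proof -
  have "(G5 b \<longlongrightarrow> - (2 * inverse (b\<^sup>2) / 3)) at_bot" unfolding G5_def using assms by real_asymp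
  then show ?thesis by (simp add: field_simps)
qed




lemma hk_le: assumes "b > 0" "x\<^sup>2 \<le> y\<^sup>2" shows "hk k b y \<le> hk k b x"
proof -
  have "0 < sqrt (x\<^sup>2 + b)" using assms by (simp add: add_nonneg_pos)
  moreover have "sqrt (x\<^sup>2 + b) \<le> sqrt (y\<^sup>2 + b)" using assms by simp
  ultimately have "sqrt (x\<^sup>2 + b) ^ k \<le> sqrt (y\<^sup>2 + b) ^ k" "0 < sqrt (x\<^sup>2 + b) ^ k"
    by (auto intro: power_mono)
  then show ?thesis unfolding hk_def by (simp add: frac_le)
qed

lemma hk_nonneg: "b > 0 \<Longrightarrow> 0 \<le> hk k b y"
  unfolding hk_def by simp

lemma hk_max: "b > 0 \<Longrightarrow> hk k b y \<le> 1 / sqrt b ^ k"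
  using hk_le[of b 0 y k] unfolding hk_def by simp

lemma unimod_hk:
  assumes b: "b > 0" and G: "\<And>y. (G has_real_derivative hk k b y) (at y)"
    and B: "\<And>y. \<bar>G y\<bar> \<le> B"
  shows "unimod (\<lambda>x. hk k b (x - c)) (\<lambda>x. G (x - c)) c (1 / sqrt b ^ k) (- B) B"
proof
  fix x
  have d: "((\<lambda>x. x - c) has_real_derivative 1 - 0) (at x)"
    by (rule DERIV_diff[OF DERIV_ident DERIV_const])
  show "((\<lambda>x. G (x - c)) has_real_derivative hk k b (x - c)) (at x)"
    using DERIV_chain2[OF G d] by simp
next
  fix x y assume "x \<le> y" "y \<le> c"
  then have "(c - y)\<^sup>2 \<le> (c - x)\<^sup>2" by (intro power_mono) auto
  then have "(y - c)\<^sup>2 \<le> (x - c)\<^sup>2" by (simp add: power2_commute)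
  then show "hk k b (x - c) \<le> hk k b (y - c)" using hk_le b by blast
next
  fix x y assume "c \<le> x" "x \<le> y"
  then have "(x - c)\<^sup>2 \<le> (y - c)\<^sup>2" by (intro power_mono) auto
  then show "hk k b (y - c) \<le> hk k b (x - c)" using hk_le b by blast
next
  fix x show "G (x - c) \<le> B" using B[of "x - c"] by linarith
next
  fix x show "- B \<le> G (x - c)" using B[of "x - c"] by linarith
qed (use b hk_nonneg hk_max in auto)

lemma G5_bound: assumes b: "b > 0" shows "\<bar>G5 b y\<bar> \<le> 2 / (3 * b\<^sup>2)"
proof -
  have p: "y\<^sup>2 + b > 0" using b by (simp add: add_nonneg_pos)
  define s where "s = sqrt (y\<^sup>2 + b)"
  have s: "s > 0" "s\<^sup>2 = y\<^sup>2 + b" using p by (auto simp: s_def)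
  have "(y * (2 * y\<^sup>2 + 3 * b))\<^sup>2 \<le> (2 * s ^ 3)\<^sup>2"
  proof -
    have "(2 * s ^ 3)\<^sup>2 = 4 * (s\<^sup>2) ^ 3" by (simp add: power_mult_distrib power_mult[symmetric] mult.commute)
    also have "\<dots> = 4 * (y\<^sup>2 + b) ^ 3" using s by simp
    finally have "(2 * s ^ 3)\<^sup>2 = 4 * (y\<^sup>2 + b) ^ 3" .
    moreover have "(y * (2 * y\<^sup>2 + 3 * b))\<^sup>2 \<le> 4 * (y\<^sup>2 + b) ^ 3"
    proof -
      have "4 * (y\<^sup>2 + b) ^ 3 - (y * (2 * y\<^sup>2 + 3 * b))\<^sup>2 = 3 * b\<^sup>2 * y\<^sup>2 + 4 * b ^ 3" by algebra
      moreover have "0 \<le> 3 * b\<^sup>2 * y\<^sup>2 + 4 * b ^ 3" using b by simp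
      ultimately show ?thesis by linarith
    qed
    ultimately show ?thesis by simp
  qed
  then have "\<bar>y * (2 * y\<^sup>2 + 3 * b)\<bar> \<le> 2 * s ^ 3"
    using s(1) by (metis abs_le_square_iff abs_of_pos zero_less_mult_iff zero_less_numeral zero_less_power)
  moreover have "0 < 3 * b\<^sup>2 * s ^ 3" using s b by simp
  ultimately have "\<bar>y * (2 * y\<^sup>2 + 3 * b)\<bar> / (3 * b\<^sup>2 * s ^ 3) \<le> 2 * s ^ 3 / (3 * b\<^sup>2 * s ^ 3)"
    by (intro divide_right_mono) auto
  also have "\<dots> = 2 / (3 * b\<^sup>2)" using s by simp
  finally have "\<bar>y * (2 * y\<^sup>2 + 3 * b)\<bar> / (3 * b\<^sup>2 * s ^ 3) \<le> 2 / (3 * b\<^sup>2)" .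
  moreover have "\<bar>G5 b y\<bar> = \<bar>y * (2 * y\<^sup>2 + 3 * b)\<bar> / (3 * b\<^sup>2 * s ^ 3)"
    unfolding G5_def s_def[symmetric] using s b by (simp add: abs_div)
  ultimately show ?thesis by simp
qed

lemma G3_bound: assumes b: "b > 0" shows "\<bar>G3 b y\<bar> \<le> 1 / b"
proof -
  have p: "y\<^sup>2 + b > 0" using b by (simp add: add_nonneg_pos)
  define s where "s = sqrt (y\<^sup>2 + b)"
  have s: "s > 0" using p by (auto simp: s_def)
  have "\<bar>y\<bar> \<le> s" unfolding s_def using b by (metis real_sqrt_abs real_sqrt_le_mono le_add_same_cancel1 less_imp_le)
  then have "\<bar>y\<bar> / (b * s) \<le> s / (b * s)" using s b by (intro divide_right_mono) auto
  also have "\<dots> = 1 / b" using s by simp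
  finally have "\<bar>y\<bar> / (b * s) \<le> 1 / b" .
  moreover have "\<bar>G3 b y\<bar> = \<bar>y\<bar> / (b * s)"
    unfolding G3_def s_def[symmetric] using s b by (simp add: abs_div)
  ultimately show ?thesis by simp
qed

lemma G2_bound: assumes P: "P > 0" shows "\<bar>G2 P y\<bar> \<le> pi / 2 / P"
proof -
  have "\<bar>arctan (y / P)\<bar> \<le> pi / 2" using arctan_bounded[of "y / P"] by auto
  then have "\<bar>arctan (y / P)\<bar> / P \<le> pi / 2 / P" using P by (intro divide_right_mono) auto
  moreover have "\<bar>G2 P y\<bar> = \<bar>arctan (y / P)\<bar> / P" unfolding G2_def using P by (simp add: abs_div)
  ultimately show ?thesis by simp
qed

lemma sum5_up:
  assumes b: "b > 0" and e: "e > 0" and M: "0 \<le> M"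
  shows "e * (\<Sum>n\<in>{-M..M}. hk 5 b (of_int n * e - c)) \<le> 4 / (3 * b\<^sup>2) + 2 * e * (1 / sqrt b ^ 5)"
proof -
  interpret unimod "\<lambda>x. hk 5 b (x - c)" "\<lambda>x. G5 b (x - c)" c "1 / sqrt b ^ 5" "- (2 / (3 * b\<^sup>2))" "2 / (3 * b\<^sup>2)"
    by (rule unimod_hk[OF b G5_deriv[OF b]]) (rule G5_bound[OF b])
  show ?thesis using sum_upper[OF e, of "-M" M] M by simp
qed

lemma sum5_lo:
  assumes b: "b > 0" and e: "e > 0" and M: "0 \<le> M"
  shows "G5 b (of_int M * e - c) - G5 b (- of_int M * e - c) - e * (1 / sqrt b ^ 5) \<le> e * (\<Sum>n\<in>{-M..M}. hk 5 b (of_int n * e - c))"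
proof -
  interpret unimod "\<lambda>x. hk 5 b (x - c)" "\<lambda>x. G5 b (x - c)" c "1 / sqrt b ^ 5" "- (2 / (3 * b\<^sup>2))" "2 / (3 * b\<^sup>2)"
    by (rule unimod_hk[OF b G5_deriv[OF b]]) (rule G5_bound[OF b])
  show ?thesis using sum_lower[OF e M] by simp
qed

lemma sum3_up:
  assumes P: "P > 0" and e: "e > 0" and M: "0 \<le> M"
  shows "e * (\<Sum>n\<in>{-M..M}. hk 3 (P\<^sup>2) (of_int n * e - c)) \<le> 2 / P\<^sup>2 + 2 * e * (1 / P ^ 3)"
proof -
  have b: "P\<^sup>2 > 0" using P by simp
  interpret unimod "\<lambda>x. hk 3 (P\<^sup>2) (x - c)" "\<lambda>x. G3 (P\<^sup>2) (x - c)" c "1 / sqrt (P\<^sup>2) ^ 3" "- (1 / P\<^sup>2)" "1 / P\<^sup>2"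
    by (rule unimod_hk[OF b G3_deriv[OF b]]) (rule G3_bound[OF b])
  show ?thesis using sum_upper[OF e, of "-M" M] M P by simp
qed

lemma sum2_up:
  assumes P: "P > 0" and e: "e > 0" and M: "0 \<le> M"
  shows "e * (\<Sum>n\<in>{-M..M}. hk 2 (P\<^sup>2) (of_int n * e - c)) \<le> pi / P + 2 * e * (1 / P\<^sup>2)"
proof -
  have b: "P\<^sup>2 > 0" using P by simp
  interpret unimod "\<lambda>x. hk 2 (P\<^sup>2) (x - c)" "\<lambda>x. G2 P (x - c)" c "1 / sqrt (P\<^sup>2) ^ 2" "- (pi / 2 / P)" "pi / 2 / P"
    by (rule unimod_hk[OF b G2_deriv[OF P]]) (rule G2_bound[OF P])
  show ?thesis using sum_upper[OF e, of "-M" M] M P by simp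
qed

lemma sum2_lo:
  assumes P: "P > 0" and e: "e > 0" and M: "0 \<le> M"
  shows "G2 P (of_int M * e - c) - G2 P (- of_int M * e - c) - e * (1 / P\<^sup>2) \<le> e * (\<Sum>n\<in>{-M..M}. hk 2 (P\<^sup>2) (of_int n * e - c))"
proof -
  have b: "P\<^sup>2 > 0" using P by simp
  interpret unimod "\<lambda>x. hk 2 (P\<^sup>2) (x - c)" "\<lambda>x. G2 P (x - c)" c "1 / sqrt (P\<^sup>2) ^ 2" "- (pi / 2 / P)" "pi / 2 / P"
    by (rule unimod_hk[OF b G2_deriv[OF P]]) (rule G2_bound[OF P])
  show ?thesis using sum_lower[OF e M] P by simp
qed




locale geom =
  fixes P ph om z :: real
  assumes P: "P > 0" and z: "z > 0"
begin

definition bm :: "real \<Rightarrow> int \<Rightarrow> real" where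
  "bm e m = (of_int m * e - om)\<^sup>2 + P\<^sup>2"

definition wt :: "real \<Rightarrow> int \<Rightarrow> real" where
  "wt e m = z * e * P * bm e m / (4 * pi)"

definition SS :: "real \<Rightarrow> nat \<Rightarrow> nat \<Rightarrow> real" where
  "SS e My Mz = (\<Sum>n\<in>{- int My..int My}. \<Sum>m\<in>{- int Mz..int Mz}.
      wt e m * (e * hk 5 (bm e m) (of_int n * e - ph)))"

definition Eup :: "real \<Rightarrow> real" where
  "Eup e = z * P / (3 * pi) * (2 * e * (1 / P\<^sup>2)) + z * e * P / (2 * pi) * (2 / P\<^sup>2 + 2 * e * (1 / P ^ 3))"

definition Elow :: "real \<Rightarrow> real" where
  "Elow e = z * P / (3 * pi) * (e * (1 / P\<^sup>2)) + z * e * P / (4 * pi) * (2 / P\<^sup>2 + 2 * e * (1 / P ^ 3))"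

lemma bm_pos: "bm e m > 0"
  unfolding bm_def using P by (simp add: add_nonneg_pos)

lemma wt_nonneg: "e > 0 \<Longrightarrow> 0 \<le> wt e m"
  unfolding wt_def using P z bm_pos[of e m] by simp

lemma hk_bm: "hk k (P\<^sup>2) (of_int m * e - om) = 1 / sqrt (bm e m) ^ k"
  unfolding hk_def bm_def ..

lemma SS_swap: "SS e My Mz = (\<Sum>m\<in>{- int Mz..int Mz}. wt e m * (e * (\<Sum>n\<in>{- int My..int My}. hk 5 (bm e m) (of_int n * e - ph))))"
  unfolding SS_def by (subst sum.swap) (simp add: sum_distrib_left)

lemma term_up: assumes "e > 0"
  shows "wt e m * (4 / (3 * (bm e m)\<^sup>2) + 2 * e * (1 / sqrt (bm e m) ^ 5))
    = z * P / (3 * pi) * (e * hk 2 (P\<^sup>2) (of_int m * e - om)) + z * e * P / (2 * pi) * (e * hk 3 (P\<^sup>2) (of_int m * e - om))"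
proof -
  define q where "q = sqrt (bm e m)"
  have q: "q > 0" "bm e m = q\<^sup>2" using bm_pos[of e m] by (auto simp: q_def)
  show ?thesis unfolding hk_bm wt_def q_def[symmetric] q(2) using q(1)
    by (simp add: field_simps power2_eq_square eval_nat_numeral)
qed

lemma SS_upper: assumes e: "e > 0" shows "SS e My Mz \<le> z / 3 + Eup e"
proof -
  have "SS e My Mz \<le> (\<Sum>m\<in>{- int Mz..int Mz}. wt e m * (4 / (3 * (bm e m)\<^sup>2) + 2 * e * (1 / sqrt (bm e m) ^ 5)))"
    unfolding SS_swap
    by (intro sum_mono mult_left_mono wt_nonneg e sum5_up bm_pos) simp
  also have "\<dots> = (\<Sum>m\<in>{- int Mz..int Mz}. z * P / (3 * pi) * (e * hk 2 (P\<^sup>2) (of_int m * e - om)) + z * e * P / (2 * pi) * (e * hk 3 (P\<^sup>2) (of_int m * e - om)))"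
    by (intro sum.cong refl term_up e)
  also have "\<dots> = z * P / (3 * pi) * (e * (\<Sum>m\<in>{- int Mz..int Mz}. hk 2 (P\<^sup>2) (of_int m * e - om))) + z * e * P / (2 * pi) * (e * (\<Sum>m\<in>{- int Mz..int Mz}. hk 3 (P\<^sup>2) (of_int m * e - om)))"
    by (simp add: sum.distrib sum_distrib_left)
  also have "\<dots> \<le> z * P / (3 * pi) * (pi / P + 2 * e * (1 / P\<^sup>2)) + z * e * P / (2 * pi) * (2 / P\<^sup>2 + 2 * e * (1 / P ^ 3))"
    using P z e by (intro add_mono mult_left_mono sum2_up sum3_up) simp_all
  also have "\<dots> = z / 3 + Eup e" unfolding Eup_def using P by (simp add: field_simps)
  finally show ?thesis .
qed

lemma SS_mono: assumes e: "e > 0" and K: "K \<le> Mz" shows "SS e My K \<le> SS e My Mz"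
  unfolding SS_def
proof (intro sum_mono sum_mono2)
  show "{- int K..int K} \<subseteq> {- int Mz..int Mz}" using K by auto
  fix n m
  show "0 \<le> wt e m * (e * hk 5 (bm e m) (of_int n * e - ph))"
    using wt_nonneg[OF e] hk_nonneg[OF bm_pos] e by simp
qed simp

definition AA :: "real \<Rightarrow> nat \<Rightarrow> nat \<Rightarrow> real" where
  "AA e K My = (\<Sum>m\<in>{- int K..int K}. wt e m * (G5 (bm e m) (real My * e - ph) - G5 (bm e m) (- real My * e - ph)))"

lemma term_lo: assumes "e > 0"
  shows "wt e m * (e * (1 / sqrt (bm e m) ^ 5)) = z * e * P / (4 * pi) * (e * hk 3 (P\<^sup>2) (of_int m * e - om))"
proof -
  define q where "q = sqrt (bm e m)"
  have q: "q > 0" "bm e m = q\<^sup>2" using bm_pos[of e m] by (auto simp: q_def)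
  show ?thesis unfolding hk_bm wt_def q_def[symmetric] q(2) using q(1)
    by (simp add: field_simps power2_eq_square eval_nat_numeral)
qed

lemma term_lim: assumes "e > 0"
  shows "wt e m * (2 / (3 * (bm e m)\<^sup>2) - - (2 / (3 * (bm e m)\<^sup>2))) = z * P / (3 * pi) * (e * hk 2 (P\<^sup>2) (of_int m * e - om))"
proof -
  define q where "q = sqrt (bm e m)"
  have q: "q > 0" "bm e m = q\<^sup>2" using bm_pos[of e m] by (auto simp: q_def)
  show ?thesis unfolding hk_bm wt_def q_def[symmetric] q(2) using q(1)
    by (simp add: field_simps power2_eq_square eval_nat_numeral)
qed

lemma SS_lo_K: assumes e: "e > 0"
  shows "AA e K My - z * e * P / (4 * pi) * (2 / P\<^sup>2 + 2 * e * (1 / P ^ 3)) \<le> SS e My K"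
proof -
  have "(\<Sum>m\<in>{- int K..int K}. wt e m * (G5 (bm e m) (real My * e - ph) - G5 (bm e m) (- real My * e - ph) - e * (1 / sqrt (bm e m) ^ 5))) \<le> SS e My K"
    unfolding SS_swap
  proof (intro sum_mono mult_left_mono wt_nonneg e)
    fix m
    show "G5 (bm e m) (real My * e - ph) - G5 (bm e m) (- real My * e - ph) - e * (1 / sqrt (bm e m) ^ 5)
       \<le> e * (\<Sum>n\<in>{- int My..int My}. hk 5 (bm e m) (of_int n * e - ph))"
      using sum5_lo[OF bm_pos[of e m] e, of "int My" ph] by simp
  qed
  moreover have "(\<Sum>m\<in>{- int K..int K}. wt e m * (G5 (bm e m) (real My * e - ph) - G5 (bm e m) (- real My * e - ph) - e * (1 / sqrt (bm e m) ^ 5)))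
     = AA e K My - z * e * P / (4 * pi) * (e * (\<Sum>m\<in>{- int K..int K}. hk 3 (P\<^sup>2) (of_int m * e - om)))"
    unfolding AA_def right_diff_distrib term_lo[OF e] by (simp add: sum_subtractf sum_distrib_left)
  moreover have "z * e * P / (4 * pi) * (e * (\<Sum>m\<in>{- int K..int K}. hk 3 (P\<^sup>2) (of_int m * e - om)))
      \<le> z * e * P / (4 * pi) * (2 / P\<^sup>2 + 2 * e * (1 / P ^ 3))"
    using P z e by (intro mult_left_mono sum3_up) simp_all
  ultimately show ?thesis by linarith
qed

lemma AA_lim: assumes e: "e > 0"
  shows "((\<lambda>My. AA e K My) \<longlongrightarrow> z * P / (3 * pi) * (e * (\<Sum>m\<in>{- int K..int K}. hk 2 (P\<^sup>2) (of_int m * e - om)))) sequentially"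
proof -
  have top: "filterlim (\<lambda>n::nat. real n * e - ph) at_top sequentially" using e by real_asymp
  have bot: "filterlim (\<lambda>n::nat. - real n * e - ph) at_bot sequentially" using e by real_asymp
  have "((\<lambda>My. AA e K My) \<longlongrightarrow> (\<Sum>m\<in>{- int K..int K}. wt e m * (2 / (3 * (bm e m)\<^sup>2) - - (2 / (3 * (bm e m)\<^sup>2))))) sequentially"
    unfolding AA_def
    by (intro tendsto_sum tendsto_mult_left tendsto_diff filterlim_compose[OF G5_top[OF bm_pos] top]
          filterlim_compose[OF G5_bot[OF bm_pos] bot])
  then show ?thesis unfolding term_lim[OF e] by (simp add: sum_distrib_left)
qed

lemma SS_lower: assumes e: "e > 0" and eta: "eta > 0"
  shows "\<exists>N. \<forall>My\<ge>N. \<forall>Mz\<ge>N. z / 3 - eta - Elow e < SS e My Mz"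
proof -
  have l1: "((\<lambda>K::nat. G2 P (real K * e - om)) \<longlongrightarrow> pi / 2 / P) sequentially"
  proof -
    have "((\<lambda>K::nat. G2 P (real K * e - om)) \<longlongrightarrow> pi * inverse P / 2) sequentially"
      unfolding G2_def using e P by real_asymp
    then show ?thesis by (simp add: field_simps)
  qed
  have l2: "((\<lambda>K::nat. G2 P (- real K * e - om)) \<longlongrightarrow> - (pi / 2 / P)) sequentially"
  proof -
    have "((\<lambda>K::nat. G2 P (- real K * e - om)) \<longlongrightarrow> - (pi * inverse P / 2)) sequentially"
      unfolding G2_def using e P by real_asymp
    then show ?thesis by (simp add: field_simps)
  qed
  have eq: "z * P / (3 * pi) * (pi / 2 / P - - (pi / 2 / P)) = z / 3" using P by (simp add: field_simps)
  have "((\<lambda>K::nat. z * P / (3 * pi) * (G2 P (real K * e - om) - G2 P (- real K * e - om))) \<longlongrightarrow> z * P / (3 * pi) * (pi / 2 / P - - (pi / 2 / P))) sequentially"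
    by (intro tendsto_mult_left tendsto_diff l1 l2)
  then have "((\<lambda>K::nat. z * P / (3 * pi) * (G2 P (real K * e - om) - G2 P (- real K * e - om))) \<longlongrightarrow> z / 3) sequentially" unfolding eq .
  from order_tendstoD(1)[OF this, of "z / 3 - eta / 2"] eta
  obtain K where K: "z / 3 - eta / 2 < z * P / (3 * pi) * (G2 P (real K * e - om) - G2 P (- real K * e - om))"
    unfolding eventually_sequentially by auto
  define LK where "LK = z * P / (3 * pi) * (e * (\<Sum>m\<in>{- int K..int K}. hk 2 (P\<^sup>2) (of_int m * e - om)))"
  have "G2 P (real K * e - om) - G2 P (- real K * e - om) - e * (1 / P\<^sup>2) \<le> e * (\<Sum>m\<in>{- int K..int K}. hk 2 (P\<^sup>2) (of_int m * e - om))"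
    using sum2_lo[OF P e, of "int K" om] by simp
  then have "z * P / (3 * pi) * (G2 P (real K * e - om) - G2 P (- real K * e - om) - e * (1 / P\<^sup>2)) \<le> LK"
    unfolding LK_def using z P by (intro mult_left_mono) simp_all
  then have LK: "z / 3 - eta / 2 - z * P / (3 * pi) * (e * (1 / P\<^sup>2)) < LK"
    using K by (simp add: right_diff_distrib)
  from order_tendstoD(1)[OF AA_lim[OF e, of K], of "LK - eta / 2"] eta
  obtain N1 where N1: "\<And>My. My \<ge> N1 \<Longrightarrow> LK - eta / 2 < AA e K My"
    unfolding eventually_sequentially LK_def by auto
  show ?thesis
  proof (intro exI allI impI)
    fix My Mz assume My: "max N1 K \<le> My" and Mz: "max N1 K \<le> Mz"
    have "AA e K My - z * e * P / (4 * pi) * (2 / P\<^sup>2 + 2 * e * (1 / P ^ 3)) \<le> SS e My Mz"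
      using SS_lo_K[OF e, of K My] SS_mono[OF e, of K Mz My] Mz by simp
    moreover have "LK - eta / 2 < AA e K My" using N1 My by simp
    ultimately show "z / 3 - eta - Elow e < SS e My Mz" using LK unfolding Elow_def by simp
  qed
qed

end



context geom begin

lemma SS_approx: assumes eta: "eta > 0"
  shows "\<exists>e0>0. \<forall>e. 0 < e \<and> e < e0 \<longrightarrow> (\<exists>N. \<forall>My\<ge>N. \<forall>Mz\<ge>N. \<bar>SS e My Mz - z / 3\<bar> < eta)"
proof -
  have "(Eup \<longlongrightarrow> Eup 0) (at_right 0)" unfolding Eup_def by (intro tendsto_intros) auto
  moreover have "Eup 0 = 0" unfolding Eup_def by simp
  ultimately have t1: "(Eup \<longlongrightarrow> 0) (at_right 0)" by simp
  have "(Elow \<longlongrightarrow> Elow 0) (at_right 0)" unfolding Elow_def by (intro tendsto_intros) auto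
  moreover have "Elow 0 = 0" unfolding Elow_def by simp
  ultimately have t2: "(Elow \<longlongrightarrow> 0) (at_right 0)" by simp
  have "eventually (\<lambda>e. Eup e < eta / 2 \<and> Elow e < eta / 2) (at_right 0)"
    using order_tendstoD(2)[OF t1, of "eta / 2"] order_tendstoD(2)[OF t2, of "eta / 2"] eta
    by (auto intro: eventually_conj)
  then obtain b where b: "b > 0" "\<And>e. e > 0 \<Longrightarrow> e < b \<Longrightarrow> Eup e < eta / 2 \<and> Elow e < eta / 2"
    unfolding eventually_at_right[OF zero_less_one] by auto
  show ?thesis
  proof (intro exI[of _ b] conjI allI impI b(1))
    fix e assume e: "0 < e \<and> e < b"
    then have E: "Eup e < eta / 2" "Elow e < eta / 2" using b(2) by auto
    obtain N where N: "\<And>My Mz. My \<ge> N \<Longrightarrow> Mz \<ge> N \<Longrightarrow> z / 3 - eta / 2 - Elow e < SS e My Mz"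
      using SS_lower[of e "eta / 2"] e eta by auto
    show "\<exists>N. \<forall>My\<ge>N. \<forall>Mz\<ge>N. \<bar>SS e My Mz - z / 3\<bar> < eta"
    proof (intro exI allI impI)
      fix My Mz assume "My \<ge> N" "Mz \<ge> N"
      then show "\<bar>SS e My Mz - z / 3\<bar> < eta"
        using N[of My Mz] SS_upper[of e My Mz] e E by (simp add: abs_less_iff)
    qed
  qed
qed

end

lemma chan_sq:
  fixes d r zeta lambda theta phi :: real
  assumes d: "d > 0" and r: "r > 0" and P: "Psi theta phi > 0" and z: "zeta > 0"
  shows "(chan_norm (zeta * d\<^sup>2) lambda d r theta phi My Mz)\<^sup>2
     = geom.SS (Psi theta phi) (Phi theta phi) (Omega theta) zeta (d / r) My Mz"
proof -
  interpret g: geom "Psi theta phi" "Phi theta phi" "Omega theta" zeta using P z by unfold_locales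
  define e where "e = d / r"
  have e: "e > 0" "d = e * r" using d r by (auto simp: e_def)
  have trm: "(cmod (chan_entry (zeta * d\<^sup>2) lambda d r theta phi n m))\<^sup>2
      = g.wt e m * (e * hk 5 (g.bm e m) (of_int n * e - Phi theta phi))" for n m
  proof -
    define S where "S = (of_int n * e - Phi theta phi)\<^sup>2 + (of_int m * e - Omega theta)\<^sup>2 + (Psi theta phi)\<^sup>2"
    have S0: "S > 0" unfolding S_def using P by (simp add: add_nonneg_pos)
    define s where "s = sqrt S"
    have s: "s > 0" using S0 by (simp add: s_def)
    have rn: "elem_dist d r theta phi n m = r * s" unfolding elem_dist_def s_def S_def e_def ..
    have S2: "(of_int n * e - Phi theta phi)\<^sup>2 + g.bm e m = S" unfolding g.bm_def S_def by simp
    define X where "X = zeta * d\<^sup>2 * (r ^ 3 * Psi theta phi ^ 3 + r * Psi theta phi * (r * Omega theta - of_int m * d)\<^sup>2) /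
         (4 * pi * (r * s) ^ 5)"
    have X: "X = g.wt e m * (e * hk 5 (g.bm e m) (of_int n * e - Phi theta phi))"
      unfolding X_def g.wt_def hk_def S2 s_def[symmetric] unfolding g.bm_def e(2) using r s
      by (simp add: field_simps power2_eq_square eval_nat_numeral) algebra?
    have X0: "X \<ge> 0" unfolding X using g.wt_nonneg[OF e(1)] hk_nonneg[OF g.bm_pos] e(1) by simp
    have "cmod (chan_entry (zeta * d\<^sup>2) lambda d r theta phi n m) = \<bar>sqrt X\<bar>"
      unfolding chan_entry_def Let_def rn X_def norm_mult norm_cis by simp
    then show ?thesis using X0 X by simp
  qed
  have "(chan_norm (zeta * d\<^sup>2) lambda d r theta phi My Mz)\<^sup>2 =
     (\<Sum>ny\<in>{- int My..int My}. \<Sum>nz\<in>{- int Mz..int Mz}. (cmod (chan_entry (zeta * d\<^sup>2) lambda d r theta phi ny nz))\<^sup>2)"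
    unfolding chan_norm_def by (simp add: sum_nonneg)
  also have "\<dots> = g.SS e My Mz" unfolding g.SS_def trm ..
  finally show ?thesis unfolding e_def .
qed




lemma Psi_pos: assumes "0 < theta" "theta < pi" "- (pi / 2) < phi" "phi < pi / 2"
  shows "Psi theta phi > 0"
  unfolding Psi_def using sin_gt_zero[of theta] cos_gt_zero_pi[of phi] assms by simp

theorem corollary11:
  fixes p_c p_s alpha_s zeta lambda theta_c phi_c theta_s phi_s :: real and L :: nat
  assumes "p_c > 0" and "p_s > 0" and "alpha_s > 0" and "L > 0"
    and "lambda > 0" and "0 < zeta" and "zeta \<le> 1"
    and "0 < theta_c" and "theta_c < pi" and "- (pi / 2) < phi_c" and "phi_c < pi / 2"
    and "0 < theta_s" and "theta_s < pi" and "- (pi / 2) < phi_s" and "phi_s < pi / 2"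
  shows "\<forall>\<delta>>0. \<exists>e0>0. \<forall>d A r_c r_s. d > 0 \<and> A = zeta * d\<^sup>2 \<and> r_c > 0 \<and> r_s > 0
            \<and> d / r_c < e0 \<and> d / r_s < e0 \<longrightarrow>
         (\<forall>\<^sub>F M in sequentially \<times>\<^sub>F sequentially.
            \<bar>R_cs_tilde p_c p_s alpha_s L
                (chan_norm A lambda d r_c theta_c phi_c (fst M) (snd M))
                (chan_norm A lambda d r_s theta_s phi_s (fst M) (snd M))
             - 1 / real L * log 2 (1 + p_s * real L * alpha_s * zeta\<^sup>2 / (9 + 3 * p_c * zeta))\<bar> < \<delta>)"
proof (intro allI impI)
  fix delta :: real assume delta: "delta > 0"
  have pc: "p_c > 0" and ps: "p_s > 0" and al: "alpha_s > 0" and L: "L > 0" and z: "zeta > 0"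
    using assms by auto
  have Pc: "Psi theta_c phi_c > 0" using Psi_pos assms by blast
  have Ps: "Psi theta_s phi_s > 0" using Psi_pos assms by blast
  interpret gc: geom "Psi theta_c phi_c" "Phi theta_c phi_c" "Omega theta_c" zeta using Pc z by unfold_locales
  interpret gs: geom "Psi theta_s phi_s" "Phi theta_s phi_s" "Omega theta_s" zeta using Ps z by unfold_locales
  define x0 where "x0 = zeta / 3"
  have x0: "x0 > 0" using z by (simp add: x0_def)
  define Q where "Q p = 1 / real L * log 2 (1 + p_s * real L * alpha_s * (fst p)\<^sup>2 / (1 + p_c * snd p))" for p :: "real \<times> real"
  have den: "1 + p_c * x0 > 0" using pc x0 by (simp add: add_pos_pos)
  have arg: "1 + p_s * real L * alpha_s * x0\<^sup>2 / (1 + p_c * x0) > 0"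
    using ps al L x0 den by (simp add: add_pos_nonneg)
  have cont: "isCont Q (x0, x0)"
    unfolding Q_def log_def using den arg by (intro continuous_intros) auto
  have Qx0: "Q (x0, x0) = 1 / real L * log 2 (1 + p_s * real L * alpha_s * zeta\<^sup>2 / (9 + 3 * p_c * zeta))"
  proof -
    have "x0\<^sup>2 / (1 + p_c * x0) = zeta\<^sup>2 / (9 + 3 * p_c * zeta)"
      unfolding x0_def using z pc by (simp add: field_simps power2_eq_square add_pos_pos)
    then show ?thesis unfolding Q_def fst_conv snd_conv by (metis times_divide_eq_right)
  qed
  obtain dd where dd: "dd > 0" "\<And>p. dist p (x0, x0) < dd \<Longrightarrow> dist (Q p) (Q (x0, x0)) < delta"
    using cont delta unfolding continuous_at_eps_delta by blast
  have "dd / 2 > 0" using dd by simp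
  obtain ec where ec: "ec > 0" "\<And>e. 0 < e \<Longrightarrow> e < ec \<Longrightarrow> (\<exists>N. \<forall>My\<ge>N. \<forall>Mz\<ge>N. \<bar>gc.SS e My Mz - zeta / 3\<bar> < dd / 2)"
    using gc.SS_approx[OF \<open>dd / 2 > 0\<close>] by blast
  obtain es where es: "es > 0" "\<And>e. 0 < e \<Longrightarrow> e < es \<Longrightarrow> (\<exists>N. \<forall>My\<ge>N. \<forall>Mz\<ge>N. \<bar>gs.SS e My Mz - zeta / 3\<bar> < dd / 2)"
    using gs.SS_approx[OF \<open>dd / 2 > 0\<close>] by blast
  show "\<exists>e0>0. \<forall>d A r_c r_s. d > 0 \<and> A = zeta * d\<^sup>2 \<and> r_c > 0 \<and> r_s > 0
            \<and> d / r_c < e0 \<and> d / r_s < e0 \<longrightarrow>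
         (\<forall>\<^sub>F M in sequentially \<times>\<^sub>F sequentially.
            \<bar>R_cs_tilde p_c p_s alpha_s L
                (chan_norm A lambda d r_c theta_c phi_c (fst M) (snd M))
                (chan_norm A lambda d r_s theta_s phi_s (fst M) (snd M))
             - 1 / real L * log 2 (1 + p_s * real L * alpha_s * zeta\<^sup>2 / (9 + 3 * p_c * zeta))\<bar> < delta)"
  proof (intro exI[of _ "min ec es"] conjI allI impI)
    show "min ec es > 0" using ec es by simp
    fix d A r_c r_s
    assume H: "d > 0 \<and> A = zeta * d\<^sup>2 \<and> r_c > 0 \<and> r_s > 0 \<and> d / r_c < min ec es \<and> d / r_s < min ec es"
    then have d: "d > 0" and A: "A = zeta * d\<^sup>2" and rc: "r_c > 0" and rs: "r_s > 0" by auto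
    obtain Nc where Nc: "\<And>My Mz. My \<ge> Nc \<Longrightarrow> Mz \<ge> Nc \<Longrightarrow> \<bar>gc.SS (d / r_c) My Mz - zeta / 3\<bar> < dd / 2"
      using ec(2)[of "d / r_c"] H by auto
    obtain Ns where Ns: "\<And>My Mz. My \<ge> Ns \<Longrightarrow> Mz \<ge> Ns \<Longrightarrow> \<bar>gs.SS (d / r_s) My Mz - zeta / 3\<bar> < dd / 2"
      using es(2)[of "d / r_s"] H by auto
    show "\<forall>\<^sub>F M in sequentially \<times>\<^sub>F sequentially.
            \<bar>R_cs_tilde p_c p_s alpha_s L
                (chan_norm A lambda d r_c theta_c phi_c (fst M) (snd M))
                (chan_norm A lambda d r_s theta_s phi_s (fst M) (snd M))
             - 1 / real L * log 2 (1 + p_s * real L * alpha_s * zeta\<^sup>2 / (9 + 3 * p_c * zeta))\<bar> < delta"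
      unfolding eventually_prod_sequentially
    proof (intro exI[of _ "max Nc Ns"] allI impI)
      fix m n assume m: "max Nc Ns \<le> m" and n: "max Nc Ns \<le> n"
      define hc where "hc = chan_norm A lambda d r_c theta_c phi_c n m"
      define hs where "hs = chan_norm A lambda d r_s theta_s phi_s n m"
      have hc: "hc\<^sup>2 = gc.SS (d / r_c) n m" unfolding hc_def A using chan_sq[OF d rc Pc z] .
      have hs: "hs\<^sup>2 = gs.SS (d / r_s) n m" unfolding hs_def A using chan_sq[OF d rs Ps z] .
      have c1: "\<bar>hc\<^sup>2 - x0\<bar> < dd / 2" unfolding hc x0_def using Nc m n by simp
      have c2: "\<bar>hs\<^sup>2 - x0\<bar> < dd / 2" unfolding hs x0_def using Ns m n by simp
      have "dist (hs\<^sup>2, hc\<^sup>2) (x0, x0) \<le> \<bar>hs\<^sup>2 - x0\<bar> + \<bar>hc\<^sup>2 - x0\<bar>"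
        unfolding dist_Pair_Pair dist_real_def using sqrt_sum_squares_le_sum_abs[of "hs\<^sup>2 - x0" "hc\<^sup>2 - x0"] by simp
      then have "dist (hs\<^sup>2, hc\<^sup>2) (x0, x0) < dd" using c1 c2 by simp
      then have "dist (Q (hs\<^sup>2, hc\<^sup>2)) (Q (x0, x0)) < delta" using dd(2) by blast
      moreover have "R_cs_tilde p_c p_s alpha_s L hc hs = Q (hs\<^sup>2, hc\<^sup>2)"
        unfolding R_cs_tilde_def Q_def by (simp add: power_mult[symmetric])
      ultimately show "\<bar>R_cs_tilde p_c p_s alpha_s L
                (chan_norm A lambda d r_c theta_c phi_c (fst (n, m)) (snd (n, m)))
                (chan_norm A lambda d r_s theta_s phi_s (fst (n, m)) (snd (n, m)))
             - 1 / real L * log 2 (1 + p_s * real L * alpha_s * zeta\<^sup>2 / (9 + 3 * p_c * zeta))\<bar> < delta"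
        unfolding hc_def[symmetric] hs_def[symmetric] fst_conv snd_conv Qx0[symmetric] dist_real_def by simp
    qed
  qed
qed


end
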